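(* Let $G=(V,E)$ be an $S$-regular graph with cells $V_1,\dots,V_k$, $n_i=|V_i|$, and let $C\subsetneq V$. Put $c_i=|C\cap V_i|/n_i$. Let $A_{\bar C}$ be the adjacency matrix of the subgraph of $G$ induced by $V\setminus C$. Then the maximum eigenvalue of $A_{\bar C}$ is at most \[\lambda_S\Bigl(1-\min_{1\le i\le k}c_i\Bigr)+\lambda_B\Bigl(\min_{1\le i\le k}c_i\Bigr).\]
   Context: All graphs are simple, undirected and connected. $G$ is $S$-regular ($S=(s_{ij})$ a $k\times k$ nonnegative integer matrix) if $V$ is partitioned into nonempty cells $V_1,\dots,V_k$ such that every vertex of $V_i$ has exactly $s_{ij}$ neighbours in $V_j$. Let $A$ be the adjacency matrix of $G$, $|V|=n>k$. The matrix $S$ is diagonalizable with real eigenvalues $\lambda_{S_1},\dots,\lambda_{S_k}$ (with multiplicity); the subspace $W=\mathrm{span}\{\mathbf{1}_{V_1},\dots,\mathbf{1}_{V_k}\}$ is $A$-invariant and the eigenvalues of $A$ on $W$ are exactly $\lambda_{S_1},\dots,\lambda_{S_k}$ (the $S$-eigenvalues). The remaining $n-k$ eigenvalues of $A$ (those of $A$ restricted to $W^\perp$) are the bulk eigenvalues. $\lambda_S$ is the largest eigenvalue of $S$ and $\lambda_B$ is the largest absolute value of a bulk eigenvalue. *)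

theory Defs
  imports Main "HOL-Library.Disjoint_Sets" Complex_Main
begin

definition simple_connected_graph :: "'a set \<Rightarrow> ('a \<Rightarrow> 'a \<Rightarrow> bool) \<Rightarrow> bool" where
  "simple_connected_graph V E \<longleftrightarrow>
     finite V \<and> V \<noteq> {} \<and>
     (\<forall>u v. E u v \<longrightarrow> u \<in> V \<and> v \<in> V) \<and>
     (\<forall>u v. E u v \<longrightarrow> E v u) \<and>
     (\<forall>u. \<not> E u u) \<and>
     (\<forall>u\<in>V. \<forall>v\<in>V. E\<^sup>*\<^sup>* u v)"

definition S_regular ::
  "'a set \<Rightarrow> ('a \<Rightarrow> 'a \<Rightarrow> bool) \<Rightarrow> nat \<Rightarrow> (nat \<Rightarrow> 'a set) \<Rightarrow> (nat \<Rightarrow> nat \<Rightarrow> nat) \<Rightarrow> bool" where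
  "S_regular V E k P S \<longleftrightarrow>
     (\<forall>i<k. P i \<noteq> {}) \<and>
     (\<forall>i<k. \<forall>j<k. i \<noteq> j \<longrightarrow> P i \<inter> P j = {}) \<and>
     (\<Union>i<k. P i) = V \<and>
     (\<forall>i<k. \<forall>j<k. \<forall>v\<in>P i. card {w \<in> P j. E v w} = S i j)"

definition adj :: "('a \<Rightarrow> 'a \<Rightarrow> bool) \<Rightarrow> 'a \<Rightarrow> 'a \<Rightarrow> real" where
  "adj E u v = (if E u v then 1 else 0)"

definition is_eigvec_on :: "'a set \<Rightarrow> ('a \<Rightarrow> 'a \<Rightarrow> real) \<Rightarrow> real \<Rightarrow> ('a \<Rightarrow> real) \<Rightarrow> bool" where
  "is_eigvec_on U M \<mu> x \<longleftrightarrow>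
     (\<forall>v. v \<notin> U \<longrightarrow> x v = 0) \<and> (\<exists>v\<in>U. x v \<noteq> 0) \<and>
     (\<forall>u\<in>U. (\<Sum>w\<in>U. M u w * x w) = \<mu> * x u)"

definition is_eigenvalue_on :: "'a set \<Rightarrow> ('a \<Rightarrow> 'a \<Rightarrow> real) \<Rightarrow> real \<Rightarrow> bool" where
  "is_eigenvalue_on U M \<mu> \<longleftrightarrow> (\<exists>x. is_eigvec_on U M \<mu> x)"

definition max_eigenvalue :: "'a set \<Rightarrow> ('a \<Rightarrow> 'a \<Rightarrow> real) \<Rightarrow> real" where
  "max_eigenvalue U M = Max {\<mu>. is_eigenvalue_on U M \<mu>}"

definition lambda_S :: "nat \<Rightarrow> (nat \<Rightarrow> nat \<Rightarrow> nat) \<Rightarrow> real" where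
  "lambda_S k S = max_eigenvalue {..<k} (\<lambda>i j. real (S i j))"

text \<open>Bulk eigenvalues: eigenvalues of A restricted to W-perp, where
  W = span of the cell indicator vectors.\<close>
definition is_bulk_eigenvalue ::
  "'a set \<Rightarrow> ('a \<Rightarrow> 'a \<Rightarrow> bool) \<Rightarrow> nat \<Rightarrow> (nat \<Rightarrow> 'a set) \<Rightarrow> real \<Rightarrow> bool" where
  "is_bulk_eigenvalue V E k P \<mu> \<longleftrightarrow>
     (\<exists>x. is_eigvec_on V (adj E) \<mu> x \<and> (\<forall>i<k. (\<Sum>v\<in>P i. x v) = 0))"

definition lambda_B :: "'a set \<Rightarrow> ('a \<Rightarrow> 'a \<Rightarrow> bool) \<Rightarrow> nat \<Rightarrow> (nat \<Rightarrow> 'a set) \<Rightarrow> real" where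
  "lambda_B V E k P = Max {\<bar>\<mu>\<bar> | \<mu>. is_bulk_eigenvalue V E k P \<mu>}"

end

theory Submission
  imports Defs "HOL-Analysis.Analysis"
begin


definition Mv :: "('a \<Rightarrow> 'a \<Rightarrow> real) \<Rightarrow> 'a set \<Rightarrow> ('a \<Rightarrow> real) \<Rightarrow> 'a \<Rightarrow> real" where
  "Mv M V x u = (\<Sum>w\<in>V. M u w * x w)"
definition Bf :: "('a \<Rightarrow> 'a \<Rightarrow> real) \<Rightarrow> 'a set \<Rightarrow> ('a \<Rightarrow> real) \<Rightarrow> ('a \<Rightarrow> real) \<Rightarrow> real" where
  "Bf M V x y = (\<Sum>u\<in>V. \<Sum>w\<in>V. M u w * x u * y w)"
definition ip :: "'a set \<Rightarrow> ('a \<Rightarrow> real) \<Rightarrow> ('a \<Rightarrow> real) \<Rightarrow> real" where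
  "ip V x y = (\<Sum>u\<in>V. x u * y u)"

lemma Bf_sym: "(\<And>u w. M u w = M w u) \<Longrightarrow> Bf M V x y = Bf M V y x"
  unfolding Bf_def by (subst sum.swap) (simp add: mult_ac)

lemma Bf_Mv: "Bf M V x y = ip V x (Mv M V y)"
  unfolding Bf_def ip_def Mv_def by (simp add: sum_distrib_left mult_ac)

lemma Bf_add_scale: "Bf M V (\<lambda>u. x u + t * y u) (\<lambda>u. x u + t * y u) =
   Bf M V x x + t * Bf M V x y + t * Bf M V y x + t^2 * Bf M V y y"
  unfolding Bf_def by (simp add: algebra_simps sum.distrib sum_distrib_left power2_eq_square)

lemma Bf_scale: "Bf M V (\<lambda>u. c * x u) (\<lambda>u. c * x u) = c^2 * Bf M V x x"
  unfolding Bf_def by (simp add: algebra_simps sum_distrib_left power2_eq_square)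

lemma ip_scale: "ip V (\<lambda>u. c * x u) (\<lambda>u. c * x u) = c^2 * ip V x x"
  unfolding ip_def by (simp add: algebra_simps sum_distrib_left power2_eq_square)

lemma ip_add_scale: "ip V (\<lambda>u. x u + t * y u) (\<lambda>u. x u + t * y u) =
   ip V x x + 2 * t * ip V x y + t^2 * ip V y y"
  unfolding ip_def by (simp add: algebra_simps sum.distrib sum_distrib_left power2_eq_square)

lemma ip_nonneg: "ip V x x \<ge> 0"
  unfolding ip_def by (simp add: sum_nonneg)

lemma ip_zero: "finite V \<Longrightarrow> ip V x x = 0 \<Longrightarrow> u \<in> V \<Longrightarrow> x u = 0"
  unfolding ip_def by (simp add: sum_nonneg_eq_0_iff)

lemma quad_zero:
  fixes b c :: real
  assumes "\<And>t. 2 * t * b + t^2 * c \<ge> 0"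
  shows "b = 0"
proof (rule ccontr)
  assume "b \<noteq> 0"
  have c: "c \<ge> 0" using assms[of 1] assms[of "-1"] by simp
  have c1: "c + 1 \<noteq> 0" using c by simp
  define t where "t = - b / (c + 1)"
  have e: "(c+1)^2 * (2 * t * b + t^2 * c) = -(b^2 * (c + 2))"
  proof -
    have t1: "(c+1) * t = - b" unfolding t_def using c1 by simp
    have "(c+1)^2 * (2 * t * b + t^2 * c) = 2 * b * (c+1) * ((c+1) * t) + c * ((c+1) * t)^2"
      by (simp add: algebra_simps power2_eq_square)
    also have "\<dots> = -(b^2 * (c + 2))" unfolding t1 by (simp add: algebra_simps power2_eq_square)
    finally show ?thesis .
  qed
  have "(c+1)^2 * (2 * t * b + t^2 * c) \<ge> 0" using assms[of t] by simp
  moreover have "b^2 * (c + 2) > 0" using c \<open>b \<noteq> 0\<close> by (simp add: add_pos_nonneg)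
  ultimately show False using e by simp
qed

lemma compact_box: "compact (PiE UNIV (\<lambda>u. if u \<in> V then {-1..1} else {0::real}))"
proof -
  have "compactin (product_topology (\<lambda>i. euclidean) UNIV) (PiE UNIV (\<lambda>u. if u \<in> V then {-1..1} else {0::real}))"
    by (subst compactin_PiE) auto
  then show ?thesis by (simp add: euclidean_product_topology)
qed

lemma cont_ip: "continuous_on UNIV (\<lambda>x. ip V x x)"
  unfolding ip_def by (intro continuous_intros continuous_on_product_coordinates)

lemma cont_Bf: "continuous_on UNIV (\<lambda>x. Bf M V x x)"
  unfolding Bf_def by (intro continuous_intros continuous_on_product_coordinates)

lemma rayleigh:
  fixes M :: "'a \<Rightarrow> 'a \<Rightarrow> real" and V :: "'a set" and L :: "('a \<Rightarrow> real) set"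
  assumes fin: "finite V" and sym: "\<And>u w. M u w = M w u"
    and clo: "closed L"
    and sub: "\<And>x u. x \<in> L \<Longrightarrow> u \<notin> V \<Longrightarrow> x u = 0"
    and add: "\<And>x y t. x\<in>L \<Longrightarrow> y\<in>L \<Longrightarrow> (\<lambda>u. x u + t * y u) \<in> L"
    and smul: "\<And>x c. x\<in>L \<Longrightarrow> (\<lambda>u. c * x u) \<in> L"
    and inv: "\<And>x. x\<in>L \<Longrightarrow> (\<lambda>u. if u\<in>V then Mv M V x u else 0) \<in> L"
    and ne: "x0 \<in> L" "u0 \<in> V" "x0 u0 \<noteq> 0"
  shows "\<exists>m. (\<forall>x\<in>L. Bf M V x x \<le> m * ip V x x) \<and>
             (\<exists>z\<in>L. (\<exists>u\<in>V. z u \<noteq> 0) \<and> Bf M V z z = m * ip V z z) \<and>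
             (\<forall>z\<in>L. Bf M V z z = m * ip V z z \<longrightarrow> (\<forall>u\<in>V. Mv M V z u = m * z u))"
proof -
  define K where "K = L \<inter> {x. ip V x x = 1}"
  define B where "B = PiE UNIV (\<lambda>u. if u \<in> V then {-1..1} else {0::real})"
  have KB: "K \<subseteq> B"
  proof
    fix x assume x: "x \<in> K"
    have "x u \<in> (if u \<in> V then {-1..1} else {0})" for u
    proof (cases "u \<in> V")
      case True
      have "(x u)^2 \<le> ip V x x" unfolding ip_def power2_eq_square[symmetric]
        using fin True by (intro member_le_sum) auto
      then have "(x u)^2 \<le> 1" using x unfolding K_def by simp
      then have "\<bar>x u\<bar> \<le> 1" by (simp add: abs_square_le_1)
      then show ?thesis using True by auto
    next
      case False then show ?thesis using x sub unfolding K_def by auto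
    qed
    then show "x \<in> B" unfolding B_def by auto
  qed
  have cK: "compact K"
  proof -
    have "closed K" unfolding K_def
      by (intro closed_Int clo closed_Collect_eq cont_ip continuous_on_const)
    moreover have "compact B" unfolding B_def by (rule compact_box)
    ultimately have "compact (B \<inter> K)" by (intro compact_Int_closed)
    then show ?thesis using KB by (simp add: Int_absorb1)
  qed
  have ip0pos: "ip V x0 x0 > 0"
  proof -
    have "(x0 u0)^2 \<le> ip V x0 x0" unfolding ip_def power2_eq_square[symmetric]
      using fin ne by (intro member_le_sum) auto
    moreover have "(x0 u0)^2 > 0" using ne by simp
    ultimately show ?thesis by linarith
  qed
  define c0 where "c0 = 1 / sqrt (ip V x0 x0)"
  have "c0^2 * ip V x0 x0 = 1" using ip0pos by (simp add: c0_def power_divide)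
  then have "(\<lambda>u. c0 * x0 u) \<in> K" unfolding K_def using smul[OF ne(1), of c0]
    by (simp add: ip_scale)
  then have Kne: "K \<noteq> {}" by auto
  obtain z where zK: "z \<in> K" and zmax: "\<And>y. y \<in> K \<Longrightarrow> Bf M V y y \<le> Bf M V z z"
    using continuous_attains_sup[OF cK Kne continuous_on_subset[OF cont_Bf[of M V], of K]] by auto
  define m where "m = Bf M V z z"
  have C1: "Bf M V x x \<le> m * ip V x x" if xL: "x \<in> L" for x
  proof (cases "ip V x x = 0")
    case True
    then have "\<forall>u\<in>V. x u = 0" using ip_zero[OF fin] by blast
    then have "Bf M V x x = 0" unfolding Bf_def by simp
    then show ?thesis using True by simp
  next
    case False
    then have pos: "ip V x x > 0" using ip_nonneg[of V x] by linarith
    define c where "c = 1 / sqrt (ip V x x)"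
    have c2: "c^2 * ip V x x = 1" using pos by (simp add: c_def power_divide)
    then have "(\<lambda>u. c * x u) \<in> K" unfolding K_def using smul[OF xL, of c]
      by (simp add: ip_scale)
    then have "Bf M V (\<lambda>u. c * x u) (\<lambda>u. c * x u) \<le> m" using zmax m_def by blast
    then have "c^2 * Bf M V x x \<le> m" by (simp only: Bf_scale)
    then have "c^2 * Bf M V x x * ip V x x \<le> m * ip V x x" using pos by (simp add: mult_right_mono)
    moreover have "c^2 * Bf M V x x * ip V x x = Bf M V x x" using c2
      by (metis mult.assoc mult.commute mult_1)
    ultimately show ?thesis by simp
  qed
  have C2: "\<exists>z\<in>L. (\<exists>u\<in>V. z u \<noteq> 0) \<and> Bf M V z z = m * ip V z z"
  proof -
    have zL: "z \<in> L" using zK K_def by auto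
    have i1: "ip V z z = 1" using zK K_def by auto
    then have "\<exists>u\<in>V. z u \<noteq> 0" unfolding ip_def by (metis (no_types, lifting) sum.neutral mult_zero_left zero_neq_one)
    moreover have "Bf M V z z = m * ip V z z" using i1 m_def by simp
    ultimately show ?thesis using zL by blast
  qed
  have C3: "\<forall>u\<in>V. Mv M V z' u = m * z' u" if z'L: "z' \<in> L" and eq: "Bf M V z' z' = m * ip V z' z'" for z'
  proof -
    define w where "w = (\<lambda>u. if u\<in>V then m * z' u - Mv M V z' u else 0)"
    have "w = (\<lambda>u. (m * z' u) + (-1) * (if u\<in>V then Mv M V z' u else 0))"
      unfolding w_def using sub[OF z'L] by (auto simp: fun_eq_iff)
    then have wL: "w \<in> L" using add[OF smul[OF z'L, of m] inv[OF z'L], of "-1"] by simp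
    have "2 * t * (m * ip V z' w - Bf M V w z') + t^2 * (m * ip V w w - Bf M V w w) \<ge> 0" for t
    proof -
      have "(\<lambda>u. z' u + t * w u) \<in> L" using add[OF z'L wL] .
      from C1[OF this] have "Bf M V z' z' + t * Bf M V z' w + t * Bf M V w z' + t^2 * Bf M V w w
         \<le> m * (ip V z' z' + 2 * t * ip V z' w + t^2 * ip V w w)"
        by (simp add: Bf_add_scale ip_add_scale)
      moreover have "Bf M V z' w = Bf M V w z'" by (rule Bf_sym[of M, OF sym])
      ultimately show ?thesis using eq by (simp add: algebra_simps)
    qed
    then have "m * ip V z' w - Bf M V w z' = 0" by (rule quad_zero)
    moreover have "Bf M V w z' = ip V w (Mv M V z')" by (rule Bf_Mv)
    ultimately have "ip V w (\<lambda>u. m * z' u - Mv M V z' u) = 0"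
      unfolding ip_def by (simp add: algebra_simps sum_subtractf sum_distrib_left)
    moreover have "ip V w (\<lambda>u. m * z' u - Mv M V z' u) = ip V w w"
      unfolding ip_def w_def by (intro sum.cong) auto
    ultimately have "ip V w w = 0" by simp
    then have "\<forall>u\<in>V. w u = 0" using ip_zero[OF fin] by blast
    then show ?thesis unfolding w_def by simp
  qed
  show ?thesis using C1 C2 C3 by blast
qed

lemma ip_comm: "ip V x y = ip V y x"
  unfolding ip_def by (simp add: mult.commute)

lemma ip_eig: "is_eigvec_on U M \<mu> x \<Longrightarrow> ip U y (Mv M U x) = \<mu> * ip U y x"
  unfolding is_eigvec_on_def ip_def Mv_def by (simp add: sum_distrib_left mult_ac)

lemma eig_orth:
  assumes sym: "\<And>u w. M u w = M w u"
    and x: "is_eigvec_on U M \<mu> x" and y: "is_eigvec_on U M \<nu> y" and ne: "\<mu> \<noteq> \<nu>"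
  shows "ip U x y = 0"
proof -
  have "\<mu> * ip U y x = Bf M U y x" using ip_eig[OF x, of y] Bf_Mv[of M U y x] by simp
  also have "\<dots> = Bf M U x y" by (rule Bf_sym[of M, OF sym])
  also have "\<dots> = \<nu> * ip U x y" using ip_eig[OF y, of x] Bf_Mv[of M U x y] by simp
  finally have "(\<mu> - \<nu>) * ip U x y = 0" by (simp add: ip_comm[of U y x] algebra_simps)
  then show ?thesis using ne by simp
qed

lemma eigvec_ip_pos: "finite U \<Longrightarrow> is_eigvec_on U M \<mu> x \<Longrightarrow> ip U x x > 0"
proof -
  assume fin: "finite U" and x: "is_eigvec_on U M \<mu> x"
  then obtain v where v: "v \<in> U" "x v \<noteq> 0" unfolding is_eigvec_on_def by auto
  have "(x v)^2 \<le> ip U x x" unfolding ip_def power2_eq_square[symmetric]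
    using fin v by (intro member_le_sum) auto
  moreover have "(x v)^2 > 0" using v by simp
  ultimately show ?thesis by linarith
qed

lemma eig_finite:
  assumes fin: "finite U" and sym: "\<And>u w. M u w = M w u"
  shows "finite {\<mu>. is_eigenvalue_on U M \<mu>}"
proof (rule ccontr)
  assume inf: "infinite {\<mu>. is_eigenvalue_on U M \<mu>}"
  obtain \<Lambda> where La: "\<Lambda> \<subseteq> {\<mu>. is_eigenvalue_on U M \<mu>}" "finite \<Lambda>" "card \<Lambda> = Suc (card U)"
    using infinite_arbitrarily_large[OF inf] by blast
  define x where "x \<mu> = (SOME x. is_eigvec_on U M \<mu> x)" for \<mu>
  have xe: "is_eigvec_on U M \<mu> (x \<mu>)" if "\<mu> \<in> \<Lambda>" for \<mu>
  proof -
    have "\<exists>y. is_eigvec_on U M \<mu> y" using La(1) that unfolding is_eigenvalue_on_def by blast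
    then show ?thesis unfolding x_def by (rule someI_ex)
  qed
  define c where "c \<mu> = 1 / sqrt (ip U (x \<mu>) (x \<mu>))" for \<mu>
  define e where "e \<mu> u = c \<mu> * x \<mu> u" for \<mu> u
  have en: "ip U (e \<mu>) (e \<mu>) = 1" if "\<mu> \<in> \<Lambda>" for \<mu>
  proof -
    have p: "ip U (x \<mu>) (x \<mu>) > 0" by (rule eigvec_ip_pos[OF fin xe[OF that]])
    have "ip U (e \<mu>) (e \<mu>) = (c \<mu>)^2 * ip U (x \<mu>) (x \<mu>)"
      unfolding e_def by (rule ip_scale)
    also have "\<dots> = 1" using p by (simp add: c_def power_divide)
    finally show ?thesis .
  qed
  have eo: "ip U (e \<mu>) (e \<nu>) = (if \<mu> = \<nu> then 1 else 0)" if "\<mu> \<in> \<Lambda>" "\<nu> \<in> \<Lambda>" for \<mu> \<nu>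
  proof (cases "\<mu> = \<nu>")
    case True then show ?thesis using en that by simp
  next
    case False
    have "ip U (x \<mu>) (x \<nu>) = 0" by (rule eig_orth[OF sym xe[OF that(1)] xe[OF that(2)] False])
    then have "ip U (e \<mu>) (e \<nu>) = 0" unfolding e_def ip_def
      by (simp add: algebra_simps sum_distrib_left[symmetric])
    then show ?thesis using False by simp
  qed
  define sv where "sv v = (\<Sum>\<mu>\<in>\<Lambda>. (e \<mu> v)^2)" for v
  have bessel: "sv v \<le> 1" if vU: "v \<in> U" for v
  proof -
    define g where "g u = (\<Sum>\<mu>\<in>\<Lambda>. e \<mu> v * e \<mu> u)" for u
    have gv: "g v = sv v" unfolding g_def sv_def by (simp add: power2_eq_square)
    have "ip U g g = (\<Sum>u\<in>U. \<Sum>\<mu>\<in>\<Lambda>. \<Sum>\<nu>\<in>\<Lambda>. (e \<mu> v * e \<nu> v) * (e \<mu> u * e \<nu> u))"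
      unfolding ip_def g_def sum_product by (simp add: mult_ac)
    also have "\<dots> = (\<Sum>\<mu>\<in>\<Lambda>. \<Sum>\<nu>\<in>\<Lambda>. \<Sum>u\<in>U. (e \<mu> v * e \<nu> v) * (e \<mu> u * e \<nu> u))"
      by (subst sum.swap) (simp add: sum.swap[of _ U])
    also have "\<dots> = (\<Sum>\<mu>\<in>\<Lambda>. \<Sum>\<nu>\<in>\<Lambda>. (e \<mu> v * e \<nu> v) * ip U (e \<mu>) (e \<nu>))"
      unfolding ip_def by (simp add: sum_distrib_left)
    also have "\<dots> = (\<Sum>\<mu>\<in>\<Lambda>. \<Sum>\<nu>\<in>\<Lambda>. (e \<mu> v * e \<nu> v) * (if \<mu> = \<nu> then 1 else 0))"
      using eo by (intro sum.cong refl) simp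
    also have "\<dots> = (\<Sum>\<mu>\<in>\<Lambda>. e \<mu> v * e \<mu> v)"
    proof (intro sum.cong refl)
      fix \<mu> assume "\<mu> \<in> \<Lambda>"
      have "(\<Sum>\<nu>\<in>\<Lambda>. e \<mu> v * e \<nu> v * (if \<mu> = \<nu> then 1 else 0))
          = (\<Sum>\<nu>\<in>\<Lambda>. if \<mu> = \<nu> then e \<mu> v * e \<nu> v else 0)"
        by (intro sum.cong refl) simp
      also have "\<dots> = e \<mu> v * e \<mu> v" using sum.delta'[OF La(2), of \<mu> "\<lambda>\<nu>. e \<mu> v * e \<nu> v"] \<open>\<mu> \<in> \<Lambda>\<close> by simp
      finally show "(\<Sum>\<nu>\<in>\<Lambda>. e \<mu> v * e \<nu> v * (if \<mu> = \<nu> then 1 else 0)) = e \<mu> v * e \<mu> v" .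
    qed
    also have "\<dots> = sv v" unfolding sv_def by (simp add: power2_eq_square)
    finally have gg: "ip U g g = sv v" .
    have "(g v)^2 \<le> ip U g g" unfolding ip_def power2_eq_square[symmetric]
      using fin vU by (intro member_le_sum) auto
    then have "(sv v)^2 \<le> sv v" using gv gg by simp
    moreover have "sv v \<ge> 0" unfolding sv_def by (simp add: sum_nonneg)
    ultimately show ?thesis
    proof (cases "sv v \<le> 1")
      case False
      then have "sv v * 1 < sv v * sv v" by (intro mult_strict_left_mono) auto
      then show ?thesis using \<open>(sv v)^2 \<le> sv v\<close> by (simp add: power2_eq_square)
    qed

  qed
  have "real (card \<Lambda>) = (\<Sum>\<mu>\<in>\<Lambda>. ip U (e \<mu>) (e \<mu>))" using en by simp
  also have "\<dots> = (\<Sum>v\<in>U. sv v)" unfolding ip_def sv_def power2_eq_square by (rule sum.swap)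
  also have "\<dots> \<le> (\<Sum>v\<in>U. 1)" using bessel by (intro sum_mono) auto
  also have "\<dots> = real (card U)" by simp
  finally show False using La(3) by simp
qed



lemma Bf_abs:
  assumes "\<And>u w. M u w \<ge> 0"
  shows "\<bar>Bf M V x x\<bar> \<le> Bf M V (\<lambda>u. \<bar>x u\<bar>) (\<lambda>u. \<bar>x u\<bar>)"
proof -
  have "\<bar>Bf M V x x\<bar> \<le> (\<Sum>u\<in>V. \<bar>\<Sum>w\<in>V. M u w * x u * x w\<bar>)" unfolding Bf_def by (rule sum_abs)
  also have "\<dots> \<le> (\<Sum>u\<in>V. \<Sum>w\<in>V. \<bar>M u w * x u * x w\<bar>)" by (intro sum_mono sum_abs)
  also have "\<dots> = Bf M V (\<lambda>u. \<bar>x u\<bar>) (\<lambda>u. \<bar>x u\<bar>)" unfolding Bf_def using assms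
    by (intro sum.cong refl) (simp add: abs_mult)
  finally show ?thesis .
qed

lemma ip_abs: "ip V (\<lambda>u. \<bar>x u\<bar>) (\<lambda>u. \<bar>x u\<bar>) = ip V x x"
  unfolding ip_def by (simp add: abs_mult_self_eq)

lemma Bf_supp: "finite V \<Longrightarrow> U \<subseteq> V \<Longrightarrow> (\<And>u. u \<notin> U \<Longrightarrow> x u = 0) \<Longrightarrow> Bf M V x x = Bf M U x x"
proof -
  assume a: "finite V" "U \<subseteq> V" "\<And>u. u \<notin> U \<Longrightarrow> x u = 0"
  have "Bf M V x x = (\<Sum>u\<in>U. \<Sum>w\<in>V. M u w * x u * x w)" unfolding Bf_def
    using a by (intro sum.mono_neutral_right) auto
  also have "\<dots> = Bf M U x x" unfolding Bf_def
    using a by (intro sum.cong refl sum.mono_neutral_right) auto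
  finally show ?thesis .
qed

lemma ip_supp: "finite V \<Longrightarrow> U \<subseteq> V \<Longrightarrow> (\<And>u. u \<notin> U \<Longrightarrow> x u = 0) \<Longrightarrow> ip V x x = ip U x x"
  unfolding ip_def by (rule sum.mono_neutral_right) auto

lemma Bf_sum: "(\<And>u w. M u w = M w u) \<Longrightarrow> Bf M V y z = 0 \<Longrightarrow>
   Bf M V (\<lambda>u. y u + z u) (\<lambda>u. y u + z u) = Bf M V y y + Bf M V z z"
  using Bf_add_scale[of M V y 1 z] Bf_sym[of M V z y] by simp

lemma ip_sum: "ip V y z = 0 \<Longrightarrow>
   ip V (\<lambda>u. y u + z u) (\<lambda>u. y u + z u) = ip V y y + ip V z z"
  using ip_add_scale[of V y 1 z] by simp

theorem mainTheorem6:
  fixes V :: "'a set" and E :: "'a \<Rightarrow> 'a \<Rightarrow> bool" and k :: nat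
    and P :: "nat \<Rightarrow> 'a set" and S :: "nat \<Rightarrow> nat \<Rightarrow> nat" and C :: "'a set"
  assumes graph: "simple_connected_graph V E"
    and reg: "S_regular V E k P S"
    and nk: "card V > k"
    and C: "C \<subset> V"
  defines "cmin \<equiv> Min ((\<lambda>i. real (card (C \<inter> P i)) / real (card (P i))) ` {..<k})"
  shows "max_eigenvalue (V - C) (adj E)
           \<le> lambda_S k S * (1 - cmin) + lambda_B V E k P * cmin"
proof -
  define A where "A = adj E"
  have finV: "finite V" and Vne: "V \<noteq> {}" and Esym: "\<And>u v. E u v \<Longrightarrow> E v u"
    using graph unfolding simple_connected_graph_def by auto
  have Asym: "\<And>u w. A u w = A w u" unfolding A_def adj_def using Esym by auto
  have Anonneg: "\<And>u w. A u w \<ge> 0" unfolding A_def adj_def by auto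
  have Pne: "\<And>i. i<k \<Longrightarrow> P i \<noteq> {}"
    and Pdisj: "\<And>i j. i<k \<Longrightarrow> j<k \<Longrightarrow> i\<noteq>j \<Longrightarrow> P i \<inter> P j = {}"
    and Pun: "(\<Union>i<k. P i) = V"
    and Pcard: "\<And>i j v. i<k \<Longrightarrow> j<k \<Longrightarrow> v \<in> P i \<Longrightarrow> card {w\<in>P j. E v w} = S i j"
    using reg unfolding S_regular_def by auto
  have PV: "\<And>i. i<k \<Longrightarrow> P i \<subseteq> V" using Pun by auto
  have finP: "\<And>i. i<k \<Longrightarrow> finite (P i)" using PV finV finite_subset by blast
  have cardP: "\<And>i. i<k \<Longrightarrow> card (P i) > 0" using finP Pne by (simp add: card_gt_0_iff)
  define cl where "cl u = (THE i. i < k \<and> u \<in> P i)" for u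
  have cl_eq: "cl u = i" if "i<k" "u \<in> P i" for u i
    unfolding cl_def
  proof (rule the_equality)
    show "i < k \<and> u \<in> P i" using that by simp
    fix j assume "j < k \<and> u \<in> P j"
    then show "j = i" using Pdisj[of i j] that by blast
  qed
  have cl_in: "cl u < k \<and> u \<in> P (cl u)" if uV: "u \<in> V" for u
  proof -
    obtain i where "i<k" "u \<in> P i" using uV Pun by auto
    then show ?thesis using cl_eq by simp
  qed
  have sum_part: "(\<Sum>u\<in>V. f u) = (\<Sum>i<k. \<Sum>u\<in>P i. f u)" for f :: "'a \<Rightarrow> real"
  proof -
    have "(\<Sum>u\<in>V. f u) = (\<Sum>u\<in>(\<Union>i<k. P i). f u)" using Pun by simp
    also have "\<dots> = (\<Sum>i<k. \<Sum>u\<in>P i. f u)"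
      using finP Pdisj by (intro sum.UNION_disjoint) auto
    finally show ?thesis .
  qed
  have sumadj: "(\<Sum>w\<in>P j. A u w) = real (S i j)" if "i<k" "j<k" "u \<in> P i" for i j u
  proof -
    have "(\<Sum>w\<in>P j. A u w) = (\<Sum>w\<in>{w\<in>P j. E u w}. 1)"
      unfolding A_def adj_def using finP[OF that(2)] by (simp add: sum.inter_filter[symmetric])
    also have "\<dots> = real (card {w\<in>P j. E u w})" by simp
    finally show ?thesis using Pcard[OF that] by simp
  qed
  have cellfun: "Mv A V (\<lambda>w. g (cl w)) u = (\<Sum>j<k. real (S (cl u) j) * g j)" if "u \<in> V" for g u
  proof -
    have "Mv A V (\<lambda>w. g (cl w)) u = (\<Sum>j<k. \<Sum>w\<in>P j. A u w * g (cl w))"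
      unfolding Mv_def by (rule sum_part)
    also have "\<dots> = (\<Sum>j<k. (\<Sum>w\<in>P j. A u w) * g j)"
      by (intro sum.cong refl) (simp add: sum_distrib_right cl_eq)
    also have "\<dots> = (\<Sum>j<k. real (S (cl u) j) * g j)"
      using cl_in[OF that] sumadj by (intro sum.cong refl) simp
    finally show ?thesis .
  qed
  define LV where "LV = {x::'a\<Rightarrow>real. \<forall>u. u \<notin> V \<longrightarrow> x u = 0}"
  define LW where "LW = {x::'a\<Rightarrow>real. \<exists>g. \<forall>u. x u = (if u \<in> V then g (cl u) else 0)}"
  define LWp where "LWp = {x::'a\<Rightarrow>real. (\<forall>u. u \<notin> V \<longrightarrow> x u = 0) \<and> (\<forall>i. i<k \<longrightarrow> (\<Sum>u\<in>P i. x u) = 0)}"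
  have orth: "(\<Sum>u\<in>V. x u * h (cl u)) = 0" if "x \<in> LWp" for x h
  proof -
    have "(\<Sum>u\<in>V. x u * h (cl u)) = (\<Sum>i<k. \<Sum>u\<in>P i. x u * h (cl u))" by (rule sum_part)
    also have "\<dots> = (\<Sum>i<k. (\<Sum>u\<in>P i. x u) * h i)"
      by (intro sum.cong refl) (simp add: sum_distrib_right cl_eq)
    also have "\<dots> = 0" using that unfolding LWp_def by simp
    finally show ?thesis .
  qed
  have LW_LV: "LW \<subseteq> LV" unfolding LW_def LV_def by auto
  have LWp_LV: "LWp \<subseteq> LV" unfolding LWp_def LV_def by auto
  have cross_ip: "ip V y z = 0" if yz: "y \<in> LW" "z \<in> LWp" for y z
  proof -
    obtain g where g: "\<And>u. y u = (if u \<in> V then g (cl u) else 0)" using yz(1) unfolding LW_def by auto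
    have "ip V y z = (\<Sum>u\<in>V. z u * g (cl u))" unfolding ip_def using g by (intro sum.cong refl) simp
    then show ?thesis using orth[OF yz(2)] by simp
  qed
  have Mv_LW: "Mv A V y u = (\<Sum>j<k. real (S (cl u) j) * g j)"
    if "\<And>u. y u = (if u \<in> V then g (cl u) else 0)" "u \<in> V" for y g u
  proof -
    have "Mv A V y u = Mv A V (\<lambda>w. g (cl w)) u" unfolding Mv_def using that(1)
      by (intro sum.cong refl) simp
    then show ?thesis using cellfun[OF that(2)] by simp
  qed
  have cross_Bf: "Bf A V y z = 0" if yz: "y \<in> LW" "z \<in> LWp" for y z
  proof -
    obtain g where g: "\<And>u. y u = (if u \<in> V then g (cl u) else 0)" using yz(1) unfolding LW_def by auto
    have "Bf A V y z = Bf A V z y" by (rule Bf_sym[of A, OF Asym])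
    also have "\<dots> = ip V z (Mv A V y)" by (rule Bf_Mv)
    also have "\<dots> = (\<Sum>u\<in>V. z u * (\<lambda>i. \<Sum>j<k. real (S i j) * g j) (cl u))"
      unfolding ip_def using Mv_LW[OF g] by (intro sum.cong refl) simp
    also have "\<dots> = 0" by (rule orth[OF yz(2)])
    finally show ?thesis .
  qed

  have closed_zero: "closed {x::'a\<Rightarrow>real. \<forall>u. u \<notin> X \<longrightarrow> x u = 0}" for X
    by (intro closed_Collect_all closed_Collect_imp open_Collect_const closed_Collect_eq
        continuous_on_product_coordinates continuous_on_const)
  have clLV: "closed LV" unfolding LV_def by (rule closed_zero)
  define rep where "rep i = (SOME v. v \<in> P i)" for i
  have rep: "rep i \<in> P i" if "i<k" for i unfolding rep_def using Pne[OF that] by (simp add: some_in_eq)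
  have LW_eq: "LW = {x::'a\<Rightarrow>real. \<forall>u. \<forall>v. (u \<notin> V \<longrightarrow> x u = 0) \<and> (u\<in>V \<and> v\<in>V \<and> cl u = cl v \<longrightarrow> x u = x v)}"
  proof (intro set_eqI iffI)
    fix x :: "'a \<Rightarrow> real" assume "x \<in> LW"
    then show "x \<in> {x. \<forall>u. \<forall>v. (u \<notin> V \<longrightarrow> x u = 0) \<and> (u\<in>V \<and> v\<in>V \<and> cl u = cl v \<longrightarrow> x u = x v)}"
      unfolding LW_def by auto
  next
    fix x :: "'a \<Rightarrow> real" assume x: "x \<in> {x. \<forall>u. \<forall>v. (u \<notin> V \<longrightarrow> x u = 0) \<and> (u\<in>V \<and> v\<in>V \<and> cl u = cl v \<longrightarrow> x u = x v)}"
    have xx: "\<And>u v. u\<in>V \<Longrightarrow> v\<in>V \<Longrightarrow> cl u = cl v \<Longrightarrow> x u = x v"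
      and x0: "\<And>u. u \<notin> V \<Longrightarrow> x u = 0" using x by blast+
    have "x u = (if u \<in> V then x (rep (cl u)) else 0)" for u
    proof (cases "u \<in> V")
      case True
      then have "rep (cl u) \<in> P (cl u)" "cl u < k" using rep cl_in by auto
      then have "rep (cl u) \<in> V" "cl (rep (cl u)) = cl u" using PV cl_eq by auto
      then show ?thesis using xx[of u "rep (cl u)"] True by simp
    qed (simp add: x0)
    then show "x \<in> LW" unfolding LW_def by (intro CollectI exI[of _ "\<lambda>i. x (rep i)"]) blast
  qed
  have clLW: "closed LW" unfolding LW_eq
    by (intro closed_Collect_all closed_Collect_imp closed_Collect_conj open_Collect_const closed_Collect_eq
        continuous_on_product_coordinates continuous_on_const)
  have clLWp: "closed LWp" unfolding LWp_def
    by (intro closed_Collect_all closed_Collect_imp closed_Collect_conj open_Collect_const closed_Collect_eq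
        continuous_on_product_coordinates continuous_on_const continuous_intros)
  have invLV: "(\<lambda>u. if u\<in>V then Mv A V x u else 0) \<in> LV" if "x \<in> LV" for x unfolding LV_def by auto
  have invLW: "(\<lambda>u. if u\<in>V then Mv A V x u else 0) \<in> LW" if xa: "x \<in> LW" for x
  proof -
    obtain g where g: "\<And>u. x u = (if u \<in> V then g (cl u) else 0)" using xa unfolding LW_def by auto
    show ?thesis unfolding LW_def using Mv_LW[OF g]
      by (intro CollectI exI[of _ "\<lambda>i. \<Sum>j<k. real (S i j) * g j"]) auto
  qed
  have invLWp: "(\<lambda>u. if u\<in>V then Mv A V x u else 0) \<in> LWp" if xW: "x \<in> LWp" for x
  proof -
    have "(\<Sum>u\<in>P i. (if u\<in>V then Mv A V x u else 0)) = 0" if i: "i < k" for i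
    proof -
      define ind where "ind u = (if u \<in> V then (if cl u = i then 1 else 0) else (0::real))" for u
      have indW: "ind \<in> LW" unfolding LW_def ind_def
        by (intro CollectI exI[of _ "\<lambda>j. if j = i then 1 else 0"]) auto
      have "(\<Sum>u\<in>P i. (if u\<in>V then Mv A V x u else 0)) = (\<Sum>u\<in>V. ind u * Mv A V x u)"
      proof -
        have "(\<Sum>u\<in>V. ind u * Mv A V x u) = (\<Sum>u\<in>V. if u \<in> P i then Mv A V x u else 0)"
          unfolding ind_def using cl_eq[OF i] cl_in by (intro sum.cong refl) auto
        also have "\<dots> = (\<Sum>u\<in>V \<inter> P i. Mv A V x u)" using finV by (simp add: sum.If_cases)
        also have "V \<inter> P i = P i" using PV[OF i] by auto
        finally have eq: "(\<Sum>u\<in>V. ind u * Mv A V x u) = (\<Sum>u\<in>P i. Mv A V x u)" .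
        have "(\<Sum>u\<in>P i. if u\<in>V then Mv A V x u else 0) = (\<Sum>u\<in>P i. Mv A V x u)"
          using PV[OF i] by (intro sum.cong refl) auto
        with eq show ?thesis by simp
      qed
      also have "\<dots> = Bf A V ind x" unfolding Bf_Mv ip_def ..
      also have "\<dots> = 0" by (rule cross_Bf[OF indW xW])
      finally show ?thesis .
    qed
    then show ?thesis unfolding LWp_def by auto
  qed
  have addLV: "(\<lambda>u. x u + t * y u) \<in> LV" if "x \<in> LV" "y \<in> LV" for x y t using that unfolding LV_def by auto
  have smulLV: "(\<lambda>u. c * x u) \<in> LV" if "x \<in> LV" for x c using that unfolding LV_def by auto
  have addLW: "(\<lambda>u. x u + t * y u) \<in> LW" if xa: "x \<in> LW" "y \<in> LW" for x y t
  proof -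
    obtain g where g: "\<And>u. x u = (if u \<in> V then g (cl u) else 0)" using xa(1) unfolding LW_def by auto
    obtain h where h: "\<And>u. y u = (if u \<in> V then h (cl u) else 0)" using xa(2) unfolding LW_def by auto
    show ?thesis unfolding LW_def using g h by (intro CollectI exI[of _ "\<lambda>i. g i + t * h i"]) auto
  qed
  have smulLW: "(\<lambda>u. c * x u) \<in> LW" if xa: "x \<in> LW" for x c
  proof -
    obtain g where g: "\<And>u. x u = (if u \<in> V then g (cl u) else 0)" using xa(1) unfolding LW_def by auto
    show ?thesis unfolding LW_def using g by (intro CollectI exI[of _ "\<lambda>i. c * g i"]) auto
  qed
  have addLWp: "(\<lambda>u. x u + t * y u) \<in> LWp" if "x \<in> LWp" "y \<in> LWp" for x y t
    using that unfolding LWp_def by (auto simp: sum.distrib sum_distrib_left[symmetric])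
  have smulLWp: "(\<lambda>u. c * x u) \<in> LWp" if "x \<in> LWp" for x c
    using that unfolding LWp_def by (auto simp: sum_distrib_left[symmetric])

  have subLV: "\<And>x u. x \<in> LV \<Longrightarrow> u \<notin> V \<Longrightarrow> x u = 0" unfolding LV_def by auto
  have subLW: "\<And>x u. x \<in> LW \<Longrightarrow> u \<notin> V \<Longrightarrow> x u = 0" using LW_LV subLV by blast
  have subLWp: "\<And>x u. x \<in> LWp \<Longrightarrow> u \<notin> V \<Longrightarrow> x u = 0" using LWp_LV subLV by blast
  define proj where "proj x u = (if u \<in> V then (\<Sum>w\<in>P (cl u). x w) / real (card (P (cl u))) else 0)" for x u
  have projW: "proj x \<in> LW" for x unfolding LW_def proj_def
    by (intro CollectI exI[of _ "\<lambda>i. (\<Sum>w\<in>P i. x w) / real (card (P i))"]) auto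
  have projWp: "(\<lambda>u. x u - proj x u) \<in> LWp" if xV: "x \<in> LV" for x
  proof -
    have "(\<Sum>u\<in>P i. x u - proj x u) = 0" if i: "i < k" for i
    proof -
      have "(\<Sum>u\<in>P i. proj x u) = (\<Sum>u\<in>P i. (\<Sum>w\<in>P i. x w) / real (card (P i)))"
        unfolding proj_def using PV[OF i] cl_eq[OF i] by (intro sum.cong refl) auto
      also have "\<dots> = (\<Sum>w\<in>P i. x w)" using cardP[OF i] by simp
      finally show ?thesis by (simp add: sum_subtractf)
    qed
    then show ?thesis unfolding LWp_def using subLV[OF xV] by (auto simp: proj_def)
  qed
  have split: "Bf A V x x = Bf A V (proj x) (proj x) + Bf A V (\<lambda>u. x u - proj x u) (\<lambda>u. x u - proj x u)
     \<and> ip V x x = ip V (proj x) (proj x) + ip V (\<lambda>u. x u - proj x u) (\<lambda>u. x u - proj x u)"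
    if xV: "x \<in> LV" for x
  proof -
    have xe: "x = (\<lambda>u. proj x u + (x u - proj x u))" by auto
    have "Bf A V (\<lambda>u. proj x u + (x u - proj x u)) (\<lambda>u. proj x u + (x u - proj x u)) =
       Bf A V (proj x) (proj x) + Bf A V (\<lambda>u. x u - proj x u) (\<lambda>u. x u - proj x u)"
      by (rule Bf_sum[OF Asym cross_Bf[OF projW projWp[OF xV]]])
    moreover have "ip V (\<lambda>u. proj x u + (x u - proj x u)) (\<lambda>u. proj x u + (x u - proj x u)) =
       ip V (proj x) (proj x) + ip V (\<lambda>u. x u - proj x u) (\<lambda>u. x u - proj x u)"
      by (rule ip_sum[OF cross_ip[OF projW projWp[OF xV]]])
    ultimately show ?thesis using xe by simp
  qed
  have liftS: "is_eigvec_on V A \<mu> (\<lambda>u. if u\<in>V then a (cl u) else 0)"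
    if ea: "is_eigvec_on {..<k} (\<lambda>i j. real (S i j)) \<mu> a" for \<mu> a
  proof -
    obtain i where i: "i < k" "a i \<noteq> 0" using ea unfolding is_eigvec_on_def by auto
    have ev: "\<And>i. i < k \<Longrightarrow> (\<Sum>j<k. real (S i j) * a j) = \<mu> * a i"
      using ea unfolding is_eigvec_on_def by auto
    have "rep i \<in> V" "cl (rep i) = i" using rep[OF i(1)] PV[OF i(1)] cl_eq[OF i(1)] by auto
    moreover have "(\<Sum>w\<in>V. A u w * (if w\<in>V then a (cl w) else 0)) = \<mu> * (if u\<in>V then a (cl u) else 0)"
      if uV: "u \<in> V" for u
    proof -
      have "(\<Sum>w\<in>V. A u w * (if w\<in>V then a (cl w) else 0)) = Mv A V (\<lambda>w. a (cl w)) u"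
        unfolding Mv_def by (intro sum.cong refl) auto
      also have "\<dots> = (\<Sum>j<k. real (S (cl u) j) * a j)" by (rule cellfun[OF uV])
      also have "\<dots> = \<mu> * a (cl u)" using ev cl_in[OF uV] by simp
      finally show ?thesis using uV by simp
    qed
    ultimately show ?thesis unfolding is_eigvec_on_def using i by (intro conjI ballI exI[of _ "rep i"]) (auto intro!: bexI[of _ "rep i"])
  qed
  have finS: "finite {\<mu>. is_eigenvalue_on {..<k} (\<lambda>i j. real (S i j)) \<mu>}"
  proof (rule finite_subset[OF _ eig_finite[OF finV Asym]])
    show "{\<mu>. is_eigenvalue_on {..<k} (\<lambda>i j. real (S i j)) \<mu>} \<subseteq> {\<mu>. is_eigenvalue_on V A \<mu>}"
      unfolding is_eigenvalue_on_def using liftS by blast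
  qed
  obtain u0 where u0: "u0 \<in> V" using Vne by auto
  have e0LV: "(\<lambda>u. if u = u0 then 1 else 0) \<in> LV" unfolding LV_def using u0 by auto
  have "\<exists>m. (\<forall>x\<in>LV. Bf A V x x \<le> m * ip V x x) \<and>
             (\<exists>z\<in>LV. (\<exists>u\<in>V. z u \<noteq> 0) \<and> Bf A V z z = m * ip V z z) \<and>
             (\<forall>z\<in>LV. Bf A V z z = m * ip V z z \<longrightarrow> (\<forall>u\<in>V. Mv A V z u = m * z u))"
  proof (rule rayleigh[of V A LV "\<lambda>u. if u = u0 then 1 else 0" u0])
    show "finite V" by (rule finV)
    show "A u w = A w u" for u w by (rule Asym)
    show "closed LV" by (rule clLV)
    show "x u = 0" if "x \<in> LV" "u \<notin> V" for x u using subLV that by blast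
    show "(\<lambda>u. x u + t * y u) \<in> LV" if "x \<in> LV" "y \<in> LV" for x y t using addLV that by blast
    show "(\<lambda>u. c * x u) \<in> LV" if "x \<in> LV" for x c using smulLV that by blast
    show "(\<lambda>u. if u\<in>V then Mv A V x u else 0) \<in> LV" if "x \<in> LV" for x using invLV that by blast
  qed (use e0LV u0 in auto)
  then obtain mV where V1: "\<And>x. x \<in> LV \<Longrightarrow> Bf A V x x \<le> mV * ip V x x"
    and V2: "\<exists>z\<in>LV. (\<exists>u\<in>V. z u \<noteq> 0) \<and> Bf A V z z = mV * ip V z z"
    and V3: "\<And>z. z \<in> LV \<Longrightarrow> Bf A V z z = mV * ip V z z \<Longrightarrow> \<forall>u\<in>V. Mv A V z u = mV * z u"
    by blast
  have mV_S: "mV \<le> lambda_S k S"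
  proof -
    obtain x0 where x0: "x0 \<in> LV" "\<exists>u\<in>V. x0 u \<noteq> 0" "Bf A V x0 x0 = mV * ip V x0 x0" using V2 by auto
    define ax where "ax u = \<bar>x0 u\<bar>" for u
    have axV: "ax \<in> LV" using x0(1) unfolding LV_def ax_def by auto
    have "Bf A V x0 x0 \<le> Bf A V ax ax" unfolding ax_def
      using Bf_abs[of A V x0, OF Anonneg] by simp
    moreover have "ip V ax ax = ip V x0 x0" unfolding ax_def by (rule ip_abs)
    ultimately have axe: "Bf A V ax ax = mV * ip V ax ax" using V1[OF axV] x0(3) by simp
    define y0 where "y0 = proj ax"
    have y0V: "y0 \<in> LV" using projW LW_LV y0_def by auto
    have z0V: "(\<lambda>u. ax u - y0 u) \<in> LV" using projWp[OF axV] LWp_LV y0_def by auto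
    have sp1: "Bf A V ax ax = Bf A V y0 y0 + Bf A V (\<lambda>u. ax u - y0 u) (\<lambda>u. ax u - y0 u)"
      and sp2: "ip V ax ax = ip V y0 y0 + ip V (\<lambda>u. ax u - y0 u) (\<lambda>u. ax u - y0 u)"
      using split[OF axV] unfolding y0_def by auto
    have "mV * ip V ax ax = mV * ip V y0 y0 + mV * ip V (\<lambda>u. ax u - y0 u) (\<lambda>u. ax u - y0 u)"
      unfolding sp2 by (simp add: algebra_simps)
    then have "Bf A V y0 y0 = mV * ip V y0 y0"
      using sp1 V1[OF y0V] V1[OF z0V] axe by linarith
    from V3[OF y0V this] have y0e: "\<forall>u\<in>V. Mv A V y0 u = mV * y0 u" .
    define g0 where "g0 i = (\<Sum>w\<in>P i. ax w) / real (card (P i))" for i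
    have y0g: "\<And>u. y0 u = (if u \<in> V then g0 (cl u) else 0)" unfolding y0_def proj_def g0_def by simp
    obtain u1 where u1: "u1 \<in> V" "x0 u1 \<noteq> 0" using x0(2) by auto
    have g0pos: "g0 (cl u1) > 0"
    proof -
      have "ax u1 \<le> (\<Sum>w\<in>P (cl u1). ax w)" using cl_in[OF u1(1)] finP
        by (intro member_le_sum) (auto simp: ax_def)
      moreover have "ax u1 > 0" using u1 by (simp add: ax_def)
      ultimately show ?thesis unfolding g0_def using cardP cl_in[OF u1(1)] by simp
    qed
    define a where "a j = (if j < k then g0 j else 0)" for j
    have "is_eigvec_on {..<k} (\<lambda>i j. real (S i j)) mV a"
      unfolding is_eigvec_on_def
    proof (intro conjI allI impI ballI)
      show "a v = 0" if "v \<notin> {..<k}" for v using that a_def by auto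
      show "\<exists>v\<in>{..<k}. a v \<noteq> 0" using g0pos cl_in[OF u1(1)] a_def by (intro bexI[of _ "cl u1"]) auto
      fix i assume "i \<in> {..<k}"
      then have i: "i < k" by simp
      have r: "rep i \<in> V" "cl (rep i) = i" using rep[OF i] PV[OF i] cl_eq[OF i] by auto
      have "(\<Sum>j\<in>{..<k}. real (S i j) * a j) = (\<Sum>j<k. real (S (cl (rep i)) j) * g0 j)"
        using r a_def by (intro sum.cong refl) auto
      also have "\<dots> = Mv A V y0 (rep i)" using Mv_LW[OF y0g r(1)] by simp
      also have "\<dots> = mV * y0 (rep i)" using y0e r by auto
      also have "\<dots> = mV * a i" using y0g r i a_def by simp
      finally show "(\<Sum>j\<in>{..<k}. real (S i j) * a j) = mV * a i" .
    qed
    then have "mV \<in> {\<mu>. is_eigenvalue_on {..<k} (\<lambda>i j. real (S i j)) \<mu>}"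
      unfolding is_eigenvalue_on_def by auto
    then show ?thesis unfolding lambda_S_def max_eigenvalue_def using finS by (rule Max_ge[rotated])
  qed

  have "\<exists>i<k. \<not> card (P i) \<le> Suc 0"
  proof (rule ccontr)
    assume "\<not> (\<exists>i<k. \<not> card (P i) \<le> Suc 0)"
    then have "\<And>i. i < k \<Longrightarrow> card (P i) \<le> 1" by auto
    then have "(\<Sum>i<k. card (P i)) \<le> (\<Sum>i<k. 1::nat)" by (intro sum_mono) auto
    moreover have "card V \<le> (\<Sum>i<k. card (P i))" using card_UN_le[of "{..<k}" P] Pun by simp
    ultimately show False using nk by simp
  qed
  then obtain i2 where i2: "i2 < k" "\<not> card (P i2) \<le> Suc 0" by auto
  then obtain a b where ab: "a \<in> P i2" "b \<in> P i2" "a \<noteq> b"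
    using card_le_Suc0_iff_eq[OF finP[OF i2(1)]] by blast
  define xd where "xd u = (if u = a then 1 else 0) - (if u = b then 1 else (0::real))" for u
  have xdW: "xd \<in> LWp"
  proof -
    have "(\<Sum>u\<in>P j. xd u) = 0" if j: "j < k" for j
    proof -
      have "(\<Sum>u\<in>P j. xd u) = (if a \<in> P j then 1 else 0) - (if b \<in> P j then 1 else 0)"
        unfolding xd_def using finP[OF j] by (simp add: sum_subtractf)
      moreover have "a \<in> P j \<longleftrightarrow> b \<in> P j" using cl_eq[OF j] cl_eq[OF i2(1)] ab by metis
      ultimately show ?thesis by simp
    qed
    moreover have "xd u = 0" if "u \<notin> V" for u using that ab PV[OF i2(1)] xd_def by auto
    ultimately show ?thesis unfolding LWp_def by auto
  qed
  have aV: "a \<in> V" using ab PV[OF i2(1)] by auto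
  have "\<exists>m. (\<forall>x\<in>LWp. Bf A V x x \<le> m * ip V x x) \<and>
             (\<exists>z\<in>LWp. (\<exists>u\<in>V. z u \<noteq> 0) \<and> Bf A V z z = m * ip V z z) \<and>
             (\<forall>z\<in>LWp. Bf A V z z = m * ip V z z \<longrightarrow> (\<forall>u\<in>V. Mv A V z u = m * z u))"
  proof (rule rayleigh[of V A LWp xd a])
    show "finite V" by (rule finV)
    show "A u w = A w u" for u w by (rule Asym)
    show "closed LWp" by (rule clLWp)
    show "x u = 0" if "x \<in> LWp" "u \<notin> V" for x u using subLWp that by blast
    show "(\<lambda>u. x u + t * y u) \<in> LWp" if "x \<in> LWp" "y \<in> LWp" for x y t using addLWp that by blast
    show "(\<lambda>u. c * x u) \<in> LWp" if "x \<in> LWp" for x c using smulLWp that by blast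
    show "(\<lambda>u. if u\<in>V then Mv A V x u else 0) \<in> LWp" if "x \<in> LWp" for x using invLWp that by blast
  qed (use xdW aV ab in \<open>auto simp: xd_def\<close>)
  then obtain mB where B1: "\<And>x. x \<in> LWp \<Longrightarrow> Bf A V x x \<le> mB * ip V x x"
    and B2: "\<exists>z\<in>LWp. (\<exists>u\<in>V. z u \<noteq> 0) \<and> Bf A V z z = mB * ip V z z"
    and B3: "\<And>z. z \<in> LWp \<Longrightarrow> Bf A V z z = mB * ip V z z \<Longrightarrow> \<forall>u\<in>V. Mv A V z u = mB * z u"
    by blast
  have mB_bulk: "is_bulk_eigenvalue V E k P mB"
  proof -
    obtain zb where zb: "zb \<in> LWp" "\<exists>u\<in>V. zb u \<noteq> 0" "Bf A V zb zb = mB * ip V zb zb" using B2 by auto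
    have "is_eigvec_on V A mB zb" unfolding is_eigvec_on_def
      using zb B3[OF zb(1) zb(3)] subLWp[OF zb(1)] unfolding Mv_def by auto
    then show ?thesis unfolding is_bulk_eigenvalue_def A_def using zb(1) unfolding LWp_def by auto
  qed
  define BS where "BS = {\<bar>\<mu>\<bar> | \<mu>. is_bulk_eigenvalue V E k P \<mu>}"
  have finBS: "finite BS"
  proof -
    have "BS \<subseteq> abs ` {\<mu>. is_eigenvalue_on V A \<mu>}"
      unfolding BS_def is_bulk_eigenvalue_def is_eigenvalue_on_def A_def by auto
    then show ?thesis by (rule finite_subset[OF _ finite_imageI[OF eig_finite[OF finV Asym]]])
  qed
  have lB: "lambda_B V E k P = Max BS" unfolding lambda_B_def BS_def ..
  have mB_le: "mB \<le> lambda_B V E k P"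
  proof -
    have "\<bar>mB\<bar> \<in> BS" unfolding BS_def using mB_bulk by auto
    then have "\<bar>mB\<bar> \<le> Max BS" using finBS by (rule Max_ge[rotated])
    then show ?thesis unfolding lB by linarith
  qed
  have lB_le: "lambda_B V E k P \<le> mV"
  proof -
    have "BS \<noteq> {}" unfolding BS_def using mB_bulk by auto
    then have "Max BS \<in> BS" using finBS by (intro Max_in)
    then obtain \<mu>b xb where mub: "Max BS = \<bar>\<mu>b\<bar>" "is_eigvec_on V A \<mu>b xb"
      unfolding BS_def is_bulk_eigenvalue_def A_def by auto
    have xbV: "xb \<in> LV" using mub(2) unfolding is_eigvec_on_def LV_def by auto
    have axbV: "(\<lambda>u. \<bar>xb u\<bar>) \<in> LV" using xbV unfolding LV_def by auto
    have "Bf A V xb xb = \<mu>b * ip V xb xb" using Bf_Mv[of A V xb xb] ip_eig[OF mub(2), of xb] by simp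
    then have "\<bar>\<mu>b\<bar> * ip V xb xb = \<bar>Bf A V xb xb\<bar>" using ip_nonneg[of V xb] by (simp add: abs_mult)
    also have "\<dots> \<le> Bf A V (\<lambda>u. \<bar>xb u\<bar>) (\<lambda>u. \<bar>xb u\<bar>)" by (rule Bf_abs[OF Anonneg])
    also have "\<dots> \<le> mV * ip V (\<lambda>u. \<bar>xb u\<bar>) (\<lambda>u. \<bar>xb u\<bar>)" by (rule V1[OF axbV])
    also have "\<dots> = mV * ip V xb xb" by (simp add: ip_abs)
    finally have "\<bar>\<mu>b\<bar> * ip V xb xb \<le> mV * ip V xb xb" .
    moreover have "ip V xb xb > 0" by (rule eigvec_ip_pos[OF finV mub(2)])
    ultimately have "\<bar>\<mu>b\<bar> \<le> mV" by simp
    then show ?thesis unfolding lB mub(1) .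
  qed

  define U where "U = V - C"
  have finU: "finite U" using finV U_def by auto
  have UV: "U \<subseteq> V" unfolding U_def by auto
  obtain uU where uU: "uU \<in> U" using C unfolding U_def by auto
  define LU where "LU = {x::'a\<Rightarrow>real. \<forall>u. u \<notin> U \<longrightarrow> x u = 0}"
  have "\<exists>m. (\<forall>x\<in>LU. Bf A U x x \<le> m * ip U x x) \<and>
             (\<exists>z\<in>LU. (\<exists>u\<in>U. z u \<noteq> 0) \<and> Bf A U z z = m * ip U z z) \<and>
             (\<forall>z\<in>LU. Bf A U z z = m * ip U z z \<longrightarrow> (\<forall>u\<in>U. Mv A U z u = m * z u))"
  proof (rule rayleigh[of U A LU "\<lambda>u. if u = uU then 1 else 0" uU])
    show "finite U" by (rule finU)
    show "A u w = A w u" for u w by (rule Asym)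
    show "closed LU" unfolding LU_def by (rule closed_zero)
  qed (use uU in \<open>auto simp: LU_def\<close>)
  then obtain mU where U2: "\<exists>z\<in>LU. (\<exists>u\<in>U. z u \<noteq> 0) \<and> Bf A U z z = mU * ip U z z"
    and U3: "\<And>z. z \<in> LU \<Longrightarrow> Bf A U z z = mU * ip U z z \<Longrightarrow> \<forall>u\<in>U. Mv A U z u = mU * z u"
    by blast
  have E0ne: "mU \<in> {\<mu>. is_eigenvalue_on U A \<mu>}"
  proof -
    obtain z where z: "z \<in> LU" "\<exists>u\<in>U. z u \<noteq> 0" "Bf A U z z = mU * ip U z z" using U2 by auto
    have "is_eigvec_on U A mU z" unfolding is_eigvec_on_def
      using z U3[OF z(1) z(3)] unfolding Mv_def LU_def by auto
    then show ?thesis unfolding is_eigenvalue_on_def by auto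
  qed
  have finE0: "finite {\<mu>. is_eigenvalue_on U A \<mu>}" by (rule eig_finite[OF finU Asym])
  define \<mu> where "\<mu> = max_eigenvalue U A"
  have "\<mu> \<in> {\<mu>. is_eigenvalue_on U A \<mu>}" unfolding \<mu>_def max_eigenvalue_def
    using finE0 E0ne by (intro Max_in) auto
  then obtain x where x: "is_eigvec_on U A \<mu> x" unfolding is_eigenvalue_on_def by auto
  have xU: "\<And>u. u \<notin> U \<Longrightarrow> x u = 0" using x unfolding is_eigvec_on_def by auto
  have xV: "x \<in> LV" unfolding LV_def using xU UV by auto
  have ipUV: "ip V x x = ip U x x" by (rule ip_supp[OF finV UV xU])
  have ippos: "ip V x x > 0" unfolding ipUV by (rule eigvec_ip_pos[OF finU x])
  have Bfx: "Bf A V x x = \<mu> * ip V x x"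
  proof -
    have "Bf A V x x = Bf A U x x" by (rule Bf_supp[OF finV UV xU])
    also have "\<dots> = ip U x (Mv A U x)" by (rule Bf_Mv)
    also have "\<dots> = \<mu> * ip U x x" by (rule ip_eig[OF x])
    finally show ?thesis unfolding ipUV .
  qed
  have cmin_le: "cmin \<le> real (card (C \<inter> P i)) / real (card (P i))" if "i < k" for i
    unfolding cmin_def using that by (intro Min_le) auto
  have cell: "(\<Sum>u\<in>P i. (proj x u)^2) \<le> (1 - cmin) * (\<Sum>u\<in>P i. (x u)^2)" if i: "i < k" for i
  proof -
    define s where "s = (\<Sum>w\<in>P i. x w)"
    define n where "n = real (card (P i))"
    define T where "T = (\<Sum>w\<in>P i. (x w)^2)"
    have npos: "n > 0" unfolding n_def using cardP[OF i] by simp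
    have "(\<Sum>u\<in>P i. (proj x u)^2) = (\<Sum>u\<in>P i. (s/n)^2)"
      unfolding proj_def s_def n_def using PV[OF i] cl_eq[OF i] by (intro sum.cong refl) auto
    also have "\<dots> = n * (s/n)^2" by (simp add: n_def)
    also have "\<dots> = s^2 / n" using npos by (simp add: power2_eq_square)
    finally have e1: "(\<Sum>u\<in>P i. (proj x u)^2) = s^2 / n" .
    have sD: "s = (\<Sum>w\<in>P i - C. x w)" unfolding s_def
      using finP[OF i] xU U_def by (intro sum.mono_neutral_right) auto
    have TD: "(\<Sum>w\<in>P i - C. (x w)^2) = T" unfolding T_def
      using finP[OF i] xU U_def by (intro sum.mono_neutral_right[symmetric]) auto
    have "s^2 \<le> (\<Sum>w\<in>P i - C. 1^2) * (\<Sum>w\<in>P i - C. (x w)^2)"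
      using Cauchy_Schwarz_ineq_sum[of "\<lambda>_. 1::real" x "P i - C"] sD by simp
    then have cs: "s^2 \<le> real (card (P i - C)) * T" using TD by simp
    have cle: "card (P i \<inter> C) \<le> card (P i)" using finP[OF i] by (intro card_mono) auto
    have "card (P i - C) = card (P i) - card (P i \<inter> C)"
      using finP[OF i] by (intro card_Diff_subset_Int) auto
    then have cd: "real (card (P i - C)) = n * (1 - real (card (C \<inter> P i)) / real (card (P i)))"
      using cle npos unfolding n_def by (simp add: Int_commute field_simps of_nat_diff)
    have T0: "T \<ge> 0" unfolding T_def by (simp add: sum_nonneg)
    have "s^2 / n \<le> real (card (P i - C)) * T / n" using cs npos by (simp add: divide_right_mono)
    also have "\<dots> = (1 - real (card (C \<inter> P i)) / real (card (P i))) * T" unfolding cd using npos by simp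
    also have "\<dots> \<le> (1 - cmin) * T" using cmin_le[OF i] T0 by (intro mult_right_mono) auto
    finally show ?thesis unfolding e1 T_def .
  qed
  have ipy: "ip V (proj x) (proj x) \<le> (1 - cmin) * ip V x x"
  proof -
    have "ip V (proj x) (proj x) = (\<Sum>i<k. \<Sum>u\<in>P i. (proj x u)^2)"
      unfolding ip_def power2_eq_square by (rule sum_part)
    also have "\<dots> \<le> (\<Sum>i<k. (1 - cmin) * (\<Sum>u\<in>P i. (x u)^2))" using cell by (intro sum_mono) auto
    also have "\<dots> = (1 - cmin) * ip V x x"
      unfolding ip_def sum_distrib_left[symmetric] power2_eq_square using sum_part by simp
    finally show ?thesis .
  qed
  define y where "y = proj x"
  define z where "z = (\<lambda>u. x u - proj x u)"
  have sp1: "Bf A V x x = Bf A V y y + Bf A V z z" and sp2: "ip V x x = ip V y y + ip V z z"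
    using split[OF xV] unfolding y_def z_def by auto
  have yV: "y \<in> LV" using projW LW_LV y_def by auto
  have zW: "z \<in> LWp" using projWp[OF xV] z_def by auto
  define lS where "lS = lambda_S k S"
  define lB where "lB = lambda_B V E k P"
  have by1: "Bf A V y y \<le> lS * ip V y y"
    using V1[OF yV] mV_S ip_nonneg[of V y] unfolding lS_def by (meson mult_right_mono order_trans)
  have bz1: "Bf A V z z \<le> lB * ip V z z"
    using B1[OF zW] mB_le ip_nonneg[of V z] unfolding lB_def by (meson mult_right_mono order_trans)
  have BS: "lB \<le> lS" using lB_le mV_S unfolding lB_def lS_def by linarith
  have ipy': "ip V y y \<le> (1 - cmin) * ip V x x" using ipy y_def by simp
  have "\<mu> * ip V x x \<le> lS * ip V y y + lB * ip V z z" using Bfx sp1 by1 bz1 by linarith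
  also have "\<dots> = lB * ip V x x + (lS - lB) * ip V y y" unfolding sp2 by (simp add: algebra_simps)
  also have "\<dots> \<le> lB * ip V x x + (lS - lB) * ((1 - cmin) * ip V x x)"
    using BS ipy' by (intro add_left_mono mult_left_mono) auto
  also have "\<dots> = (lS * (1 - cmin) + lB * cmin) * ip V x x" by (simp add: algebra_simps)
  finally have "\<mu> \<le> lS * (1 - cmin) + lB * cmin" using ippos by simp
  then show ?thesis unfolding \<mu>_def U_def A_def lS_def lB_def .
qed


end
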